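(* Fix $n\ge 2$, $q\in\{1,\dots,n\}$ and $c\in(0,1/2)$. For every $\varepsilon>0$ and $\eta>0$ there is an integer $R$ such that for all $r\ge R$ and all integers $p$ with $0\le p\le r-n$ and $c\le p/r\le 1-c$, \[ \mathbf{P}\left(\left|\frac{k_{p,q}(\mathrm{B}_r)}{\binom{r-n}{p}\,\mu(r,p)}-1\right|>\varepsilon\right)<\eta. \] In other words, for any sequence $\{p_r\}$ with $c\le p_r/r\le 1-c$, $k_{p_r,q}(\mathrm{B}_r)/\big(\binom{r-n}{p_r}\mu(r,p_r)\big)\to 1$ in probability as $r\to\infty$, uniformly in $p_r$.
   Context: Fix an integer $n\ge 2$. For an integer $r\ge n$ write $[r]=\{1,\dots,r\}$ and $\binom{[r]}{n-1}$ for the set of $(n-1)$-element subsets of $[r]$; elements are written $I=\{i_1<\dots<i_{n-1}\}$. A Betti table is an array of real numbers $k_{p,q}$ with columns $p=0,\dots,r-n$ and rows $q=1,\dots,n$. For $I\in\binom{[r]}{n-1}$ write $[r]\setminus I=\{d_0<d_1<\dots<d_{r-n}\}$; the pure diagram $\pi(r,I)$ is the Betti table with $k_{p,q}(\pi(r,I))=0$ if $q\neq d_p-p$, and $k_{p,d_p-p}(\pi(r,I)) = (r-n)!\cdot\prod_{0\le \ell\le r-n,\ \ell\neq p}\frac{1}{|d_\ell-d_p|}$. Let $\{\mathrm{X}_I\}_{I\in\binom{[r]}{n-1}}$ be independent random variables, each uniformly distributed on $[0,1]$, and let $\mathrm{B}_r=\sum_{I}\mathrm{X}_I\,\pi(r,I)$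 be the random Betti table, so $k_{p,q}(\mathrm{B}_r)=\sum_I \mathrm{X}_I\,k_{p,q}(\pi(r,I))$. For fixed $n$ and $q\in[1,n]$ put \[ \mu(r,p)=\frac{1}{2^n}\cdot\frac{p^{q-1}(r-p-n)^{n-q}}{(q-1)!\,(n-q)!}. \] *)

theory Defs
  imports "HOL-Probability.Probability"
begin

definition subsets_idx :: "nat \<Rightarrow> nat \<Rightarrow> nat set set" where
  "subsets_idx n r = {I. I \<subseteq> {1..r} \<and> card I = n - 1}"

definition compl_list :: "nat \<Rightarrow> nat set \<Rightarrow> nat list" where
  "compl_list r I = sorted_list_of_set ({1..r} - I)"

text \<open>Entry k_{p,q} of the pure diagram pi(r,I) (n fixed).\<close>
definition pure_entry :: "nat \<Rightarrow> nat \<Rightarrow> nat set \<Rightarrow> nat \<Rightarrow> nat \<Rightarrow> real" where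
  "pure_entry n r I p q =
     (let d = compl_list r I in
      if int q \<noteq> int (d ! p) - int p then 0
      else fact (r - n) *
           (\<Prod>l \<in> {0..r-n} - {p}. 1 / \<bar>real (d ! l) - real (d ! p)\<bar>))"

text \<open>Entry k_{p,q} of the Betti table sum_I X_I pi(r,I), for a realization X.\<close>
definition betti_entry :: "nat \<Rightarrow> nat \<Rightarrow> (nat set \<Rightarrow> real) \<Rightarrow> nat \<Rightarrow> nat \<Rightarrow> real" where
  "betti_entry n r X p q = (\<Sum>I \<in> subsets_idx n r. X I * pure_entry n r I p q)"

definition rand_space :: "nat \<Rightarrow> nat \<Rightarrow> (nat set \<Rightarrow> real) measure" where
  "rand_space n r = PiM (subsets_idx n r) (\<lambda>_. uniform_measure lborel {0..1::real})"

definition mu :: "nat \<Rightarrow> nat \<Rightarrow> nat \<Rightarrow> nat \<Rightarrow> real" where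
  "mu n q r p = 1 / 2 ^ n * (real p ^ (q - 1) * real (r - p - n) ^ (n - q))
                  / (fact (q - 1) * fact (n - q))"

end

theory Submission
  imports Defs
begin


definition U :: "real measure" where "U = uniform_measure lborel {0..1::real}"

lemma U_prob: "prob_space U"
  unfolding U_def by (rule prob_space_uniform_measure) auto

lemma U_AE: "AE x in U. 0 \<le> x \<and> x \<le> 1"
  unfolding U_def by (rule AE_uniform_measureI) auto

lemma U_dens: "U = density lborel (\<lambda>x. ennreal (indicator {0..1} x))"
  unfolding U_def uniform_measure_def
  by (intro density_cong) (auto split: split_indicator)

lemma U_mean: "integral\<^sup>L U (\<lambda>x. x) = 1/2"
proof -
  have "integral\<^sup>L U (\<lambda>x. x) = integral\<^sup>L lborel (\<lambda>x. indicator {0..1} x *\<^sub>R x)"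
    unfolding U_dens by (rule integral_density) auto
  also have "\<dots> = (\<integral>x. x * indicator {0..1} x \<partial>lborel)"
    by (intro Bochner_Integration.integral_cong) (auto split: split_indicator)
  also have "\<dots> = 1/2"
  proof (subst integral_FTC_Icc_real)
    fix x :: real
    show "DERIV (\<lambda>x. x\<^sup>2 / 2) x :> x" by (auto intro!: derivative_eq_intros)
    show "isCont (\<lambda>x. x) x" by simp
  qed (auto simp: power2_eq_square)
  finally show ?thesis .
qed



lemma U_int_bounded:
  fixes f :: "real \<Rightarrow> real"
  assumes "f \<in> borel_measurable borel" "\<And>x. 0 \<le> x \<Longrightarrow> x \<le> 1 \<Longrightarrow> \<bar>f x\<bar> \<le> B"
  shows "integrable U f"
proof -
  interpret prob_space U by (rule U_prob)
  show ?thesis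
  proof (rule integrable_const_bound[where B=B])
    show "AE x in U. norm (f x) \<le> B" using U_AE by eventually_elim (use assms in auto)
    show "f \<in> borel_measurable U" using assms(1) unfolding U_def by simp
  qed
qed

lemma sq_half:
  fixes y :: real assumes "0 \<le> y" "y \<le> 1"
  shows "(y - 1/2) * (y - 1/2) \<le> 1/4" "0 \<le> (y - 1/2) * (y - 1/2)"
proof -
  have a: "\<bar>y - 1/2\<bar> \<le> 1/2" unfolding abs_le_iff using assms by auto
  have "\<bar>y - 1/2\<bar> * \<bar>y - 1/2\<bar> \<le> 1/2 * (1/2)"
    by (rule mult_mono[OF a a]) auto
  then show "(y - 1/2) * (y - 1/2) \<le> 1/4" by (simp add: abs_mult_self_eq)
  show "0 \<le> (y - 1/2) * (y - 1/2)" by simp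
qed

lemma sq_le1: fixes y :: real assumes "0 \<le> y" "y \<le> 1"
  shows "\<bar>(y - 1/2) * (y - 1/2)\<bar> \<le> 1"
  using sq_half[OF assms] by linarith

lemma U_var: "integral\<^sup>L U (\<lambda>y. (y - 1/2) * (y - 1/2)) \<le> 1/4"
proof -
  interpret prob_space U by (rule U_prob)
  have "integral\<^sup>L U (\<lambda>y. (y - 1/2) * (y - 1/2)) \<le> integral\<^sup>L U (\<lambda>y. 1/4)"
  proof (rule integral_mono_AE)
    show "integrable U (\<lambda>y. (y - 1/2) * (y - 1/2))"
      by (rule U_int_bounded[where B=1]) (use sq_le1 in auto)
    show "integrable U (\<lambda>y. 1/4::real)" by simp
    show "AE y in U. (y - 1/2) * (y - 1/2) \<le> 1/4" using U_AE
      by eventually_elim (use sq_half in auto)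
  qed
  then show ?thesis by (simp add: prob_space)
qed



definition phi :: "'i \<Rightarrow> 'i \<Rightarrow> 'i \<Rightarrow> real \<Rightarrow> real" where
  "phi I J K y = (if K = I then y - 1/2 else 1) * (if K = J then y - 1/2 else 1)"

lemma phi_prod:
  assumes "finite S" "I \<in> S" "J \<in> S"
  shows "(\<Prod>K\<in>S. phi I J K (X K)) = (X I - 1/2) * (X J - 1/2)"
  using assms by (simp add: phi_def prod.distrib)

lemma phi_int: "integrable U (phi I J K)"
  unfolding phi_def by (rule U_int_bounded[where B=1]) (use sq_le1 in auto)

lemma U_int1: "integral\<^sup>L U (\<lambda>y. y - 1/2) = 0"
proof -
  interpret prob_space U by (rule U_prob)
  have "integrable U (\<lambda>y. y)" by (rule U_int_bounded[where B=1]) auto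
  then show ?thesis using U_mean by (simp add: prob_space)
qed

lemma phi_integral:
  "integral\<^sup>L U (phi I J K) =
     (if K = I \<and> K = J then integral\<^sup>L U (\<lambda>y. (y - 1/2) * (y - 1/2))
      else if K = I \<or> K = J then 0 else 1)"
proof -
  interpret prob_space U by (rule U_prob)
  show ?thesis unfolding phi_def using U_int1 by (auto simp: prob_space)
qed

lemma cross_int:
  assumes "finite S" "I \<in> S" "J \<in> S"
  shows "integrable (PiM S (\<lambda>_. U)) (\<lambda>X. (X I - 1/2) * (X J - 1/2))"
    "integral\<^sup>L (PiM S (\<lambda>_. U)) (\<lambda>X. (X I - 1/2) * (X J - 1/2)) =
       (if I = J then integral\<^sup>L U (\<lambda>y. (y - 1/2) * (y - 1/2)) else 0)"
proof -
  interpret product_sigma_finite "\<lambda>_. U"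
    unfolding product_sigma_finite_def using prob_space_imp_sigma_finite[OF U_prob] by simp
  have eq: "\<And>X. (X I - 1/2) * (X J - 1/2) = (\<Prod>K\<in>S. phi I J K (X K))"
    using phi_prod[OF assms] by simp
  show "integrable (PiM S (\<lambda>_. U)) (\<lambda>X. (X I - 1/2) * (X J - 1/2))"
    unfolding eq by (rule product_integrable_prod) (use assms phi_int in auto)
  have "integral\<^sup>L (PiM S (\<lambda>_. U)) (\<lambda>X. (X I - 1/2) * (X J - 1/2)) =
      (\<Prod>K\<in>S. integral\<^sup>L U (phi I J K))"
    unfolding eq by (rule product_integral_prod) (use assms phi_int in auto)
  also have "\<dots> = (if I = J then integral\<^sup>L U (\<lambda>y. (y - 1/2) * (y - 1/2)) else 0)"
  proof (cases "I = J")
    case True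
    then show ?thesis unfolding phi_integral using assms
      by (simp add: if_distrib cong: if_cong)
  next
    case False
    have "integral\<^sup>L U (phi I J I) = 0" using False by (simp add: phi_integral)
    then show ?thesis using assms False by (simp add: prod_zero_iff) blast
  qed
  finally show "integral\<^sup>L (PiM S (\<lambda>_. U)) (\<lambda>X. (X I - 1/2) * (X J - 1/2)) =
       (if I = J then integral\<^sup>L U (\<lambda>y. (y - 1/2) * (y - 1/2)) else 0)" .
qed



lemma tail_bound:
  fixes w :: "'i \<Rightarrow> real" and t :: real
  assumes S: "finite S" and t: "t > 0"
  shows "measure (PiM S (\<lambda>_. U))
     {X \<in> space (PiM S (\<lambda>_. U)). t \<le> \<bar>(\<Sum>I\<in>S. X I * w I) - (\<Sum>I\<in>S. w I)/2\<bar>}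
     \<le> (\<Sum>I\<in>S. (w I)^2) / (4 * t^2)"
proof -
  let ?M = "PiM S (\<lambda>_. U)"
  interpret P: prob_space ?M by (rule prob_space_PiM) (rule U_prob)
  define v where "v = integral\<^sup>L U (\<lambda>y. (y - 1/2) * (y - 1/2))"
  have v: "v \<le> 1/4" using U_var unfolding v_def .
  define g where "g X = (\<Sum>I\<in>S. w I * (X I - 1/2))" for X :: "'i \<Rightarrow> real"
  have geq: "(\<Sum>I\<in>S. X I * w I) - (\<Sum>I\<in>S. w I)/2 = g X" for X
    unfolding g_def by (simp add: sum_subtractf sum_divide_distrib algebra_simps)
  have sq: "g X ^ 2 = (\<Sum>I\<in>S. \<Sum>J\<in>S. w I * w J * ((X I - 1/2) * (X J - 1/2)))" for X
    unfolding g_def power2_eq_square sum_product by (simp add: algebra_simps)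
  have comp: "(\<lambda>x. x I) \<in> borel_measurable ?M" if "I \<in> S" for I
  proof -
    have "(\<lambda>x. x I) \<in> measurable ?M U" by (rule measurable_component_singleton) (use that in auto)
    moreover have "sets U = sets borel" unfolding U_def by simp
    ultimately show ?thesis using measurable_cong_sets[of ?M ?M U borel] by simp
  qed
  have gm: "g \<in> borel_measurable ?M"
    unfolding g_def
    by (intro borel_measurable_sum borel_measurable_times borel_measurable_diff borel_measurable_const
        comp) auto
  have int: "integrable ?M (\<lambda>X. g X ^ 2)"
    unfolding sq
    by (intro Bochner_Integration.integrable_sum integrable_mult_right cross_int(1)[OF S]) auto
  have "integral\<^sup>L ?M (\<lambda>X. g X ^ 2) =
      (\<Sum>I\<in>S. \<Sum>J\<in>S. w I * w J * integral\<^sup>L ?M (\<lambda>X. (X I - 1/2) * (X J - 1/2)))"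
    unfolding sq
    by (subst Bochner_Integration.integral_sum, 
        (intro Bochner_Integration.integrable_sum integrable_mult_right cross_int(1)[OF S]; auto),
        intro sum.cong refl, subst Bochner_Integration.integral_sum,
        (intro integrable_mult_right cross_int(1)[OF S]; auto), auto)
  also have "\<dots> = (\<Sum>I\<in>S. \<Sum>J\<in>S. w I * w J * (if I = J then v else 0))"
    using cross_int(2)[OF S] unfolding v_def by (intro sum.cong refl) auto
  also have "\<dots> = (\<Sum>I\<in>S. (w I)^2 * v)"
    using S by (simp add: power2_eq_square if_distrib cong: if_cong)
  also have "\<dots> \<le> (\<Sum>I\<in>S. (w I)^2 * (1/4))"
    using v by (intro sum_mono mult_left_mono) auto
  finally have I2: "integral\<^sup>L ?M (\<lambda>X. g X ^ 2) \<le> (\<Sum>I\<in>S. (w I)^2) / 4"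
    by (simp add: sum_divide_distrib)
  have "measure ?M {X \<in> space ?M. t \<le> \<bar>g X\<bar>} \<le> integral\<^sup>L ?M (\<lambda>X. g X ^ 2) / t^2"
    by (rule P.second_moment_method[OF gm int t])
  also have "\<dots> \<le> ((\<Sum>I\<in>S. (w I)^2) / 4) / t^2"
    using I2 t by (intro divide_right_mono) auto
  finally show ?thesis unfolding geq by (simp add: field_simps)
qed



lemma tail_bound2:
  fixes w :: "'i \<Rightarrow> real" and t :: real
  assumes S: "finite S" and t: "t > 0"
    and A: "\<And>X. X \<in> A \<Longrightarrow> X \<in> space (PiM S (\<lambda>_. U)) \<and> t \<le> \<bar>(\<Sum>I\<in>S. X I * w I) - (\<Sum>I\<in>S. w I)/2\<bar>"
  shows "measure (PiM S (\<lambda>_. U)) A \<le> (\<Sum>I\<in>S. (w I)^2) / (4 * t^2)"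
proof -
  let ?M = "PiM S (\<lambda>_. U)"
  interpret P: prob_space ?M by (rule prob_space_PiM) (rule U_prob)
  let ?B = "{X \<in> space ?M. t \<le> \<bar>(\<Sum>I\<in>S. X I * w I) - (\<Sum>I\<in>S. w I)/2\<bar>}"
  have comp: "(\<lambda>x. x I) \<in> borel_measurable ?M" if "I \<in> S" for I
  proof -
    have "(\<lambda>x. x I) \<in> measurable ?M U" by (rule measurable_component_singleton) (use that in auto)
    moreover have "sets U = sets borel" unfolding U_def by simp
    ultimately show ?thesis using measurable_cong_sets[of ?M ?M U borel] by simp
  qed
  have hm: "(\<lambda>X. \<bar>(\<Sum>I\<in>S. X I * w I) - (\<Sum>I\<in>S. w I)/2\<bar>) \<in> borel_measurable ?M"
    by (intro borel_measurable_abs borel_measurable_diff borel_measurable_sum borel_measurable_times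
        borel_measurable_const comp) auto
  have Bm: "?B \<in> sets ?M"
  proof -
    have "?B = (\<lambda>X. \<bar>(\<Sum>I\<in>S. X I * w I) - (\<Sum>I\<in>S. w I)/2\<bar>) -` {t..} \<inter> space ?M" by auto
    also have "\<dots> \<in> sets ?M" by (rule measurable_sets[OF hm]) simp
    finally show ?thesis .
  qed
  have "measure ?M A \<le> measure ?M ?B"
  proof (cases "A \<in> sets ?M")
    case True
    show ?thesis by (rule P.finite_measure_mono) (use A Bm in auto)
  next
    case False
    then have "measure ?M A = 0" by (simp add: measure_notin_sets)
    then show ?thesis by simp
  qed
  also have "\<dots> \<le> (\<Sum>I\<in>S. (w I)^2) / (4 * t^2)" by (rule tail_bound[OF S t])
  finally show ?thesis .
qed



lemma rank_nth:
  fixes xs :: "nat list"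
  assumes "sorted_wrt (<) xs" "j < length xs"
  shows "card {y \<in> set xs. y < xs ! j} = j"
proof -
  have "{y \<in> set xs. y < xs ! j} = (\<lambda>i. xs ! i) ` {..<j}"
  proof (intro set_eqI iffI)
    fix y assume "y \<in> {y \<in> set xs. y < xs ! j}"
    then obtain i where i: "i < length xs" "y = xs ! i" "y < xs ! j" by (auto simp: in_set_conv_nth)
    have "i < j"
    proof (rule ccontr)
      assume "\<not> i < j"
      then have "j = i \<or> j < i" by auto
      then show False
        using sorted_wrt_nth_less[OF assms(1), of j i] i by auto
    qed
    then show "y \<in> (\<lambda>i. xs ! i) ` {..<j}" using i by auto
  next
    fix y assume "y \<in> (\<lambda>i. xs ! i) ` {..<j}"
    then obtain i where "i < j" "y = xs ! i" by auto
    then show "y \<in> {y \<in> set xs. y < xs ! j}"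
      using sorted_wrt_nth_less[OF assms(1), of i j] assms by auto
  qed
  moreover have "inj_on (\<lambda>i. xs ! i) {..<j}"
    using assms by (intro inj_on_nth) (auto simp: strict_sorted_iff)
  ultimately show ?thesis by (simp add: card_image)
qed

lemma prod_dist_fact:
  assumes "1 \<le> s" "s \<le> r"
  shows "(\<Prod>x\<in>{1..r} - {s}. \<bar>real x - real s\<bar>) = fact (s - 1) * fact (r - s)"
proof -
  have split: "{1..r} - {s} = {1..<s} \<union> {s<..r}" using assms by auto
  have a: "(\<Prod>x\<in>{1..<s}. \<bar>real x - real s\<bar>) = fact (s - 1)"
  proof -
    have "(\<Prod>x\<in>{1..<s}. \<bar>real x - real s\<bar>) = (\<Prod>y\<in>{1..s-1}. real y)"
      by (rule prod.reindex_bij_witness[where i="\<lambda>y. s - y" and j="\<lambda>x. s - x"]) auto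
    also have "\<dots> = fact (s - 1)" by (simp add: fact_prod)
    finally show ?thesis .
  qed
  have b: "(\<Prod>x\<in>{s<..r}. \<bar>real x - real s\<bar>) = fact (r - s)"
  proof -
    have "(\<Prod>x\<in>{s<..r}. \<bar>real x - real s\<bar>) = (\<Prod>y\<in>{1..r-s}. real y)"
      by (rule prod.reindex_bij_witness[where i="\<lambda>y. y + s" and j="\<lambda>x. x - s"]) auto
    also have "\<dots> = fact (r - s)" by (simp add: fact_prod)
    finally show ?thesis .
  qed
  have "(\<Prod>x\<in>{1..<s} \<union> {s<..r}. \<bar>real x - real s\<bar>) = 
     (\<Prod>x\<in>{1..<s}. \<bar>real x - real s\<bar>) * (\<Prod>x\<in>{s<..r}. \<bar>real x - real s\<bar>)"
    by (rule prod.union_disjoint) auto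
  then show ?thesis unfolding split by (simp only: a b)
qed



lemma pure_entry_eval:
  assumes I: "I \<in> subsets_idx n r" and n: "1 \<le> n" "n \<le> r" and p: "p \<le> r - n" and q: "1 \<le> q"
  shows "pure_entry n r I p q =
    (if p + q \<notin> I \<and> card {i\<in>I. i < p + q} = q - 1 \<and> p + q \<le> r
     then fact (r - n) / (fact (p + q - 1) * fact (r - (p + q))) * (\<Prod>i\<in>I. \<bar>real i - real (p + q)\<bar>)
     else 0)"
proof -
  define s where "s = p + q"
  have Isub: "I \<subseteq> {1..r}" and cI: "card I = n - 1" using I by (auto simp: subsets_idx_def)
  have fI: "finite I" using Isub finite_subset by blast
  define D where "D = {1..r} - I"
  have fD: "finite D" unfolding D_def by simp
  have cD: "card D = r - n + 1" unfolding D_def using Isub cI n by (simp add: card_Diff_subset fI)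
  define d where "d = compl_list r I"
  have d: "d = sorted_list_of_set D" unfolding d_def compl_list_def D_def ..
  have sd: "sorted_wrt (<) d" and setd: "set d = D" and ld: "length d = r - n + 1"
    using fD cD unfolding d by auto
  have dist: "distinct d" using sd by (simp add: strict_sorted_iff)
  have plt: "p < length d" using ld p by simp
  define x where "x = d ! p"
  have xD: "x \<in> D" unfolding x_def using plt setd nth_mem by blast
  have rank: "card {y \<in> D. y < x} = p" unfolding x_def using rank_nth[OF sd plt] setd by simp
  have x1: "1 \<le> x" "x \<le> r" "x \<notin> I" using xD unfolding D_def by auto
  have part: "card {y \<in> D. y < x} + card {i \<in> I. i < x} = x - 1"
  proof -
    have "{y \<in> D. y < x} \<union> {i \<in> I. i < x} = {1..<x}" unfolding D_def using Isub x1 by auto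
    moreover have "{y \<in> D. y < x} \<inter> {i \<in> I. i < x} = {}" unfolding D_def by auto
    ultimately show ?thesis using fD fI
      by (metis (no_types, lifting) card_Un_disjoint card_atLeastLessThan finite_Un finite_atLeastLessThan)
  qed
  define V where "V = (s \<notin> I \<and> card {i\<in>I. i < s} = q - 1 \<and> s \<le> r)"
  have cond: "(int q = int (d ! p) - int p) \<longleftrightarrow> V"
  proof
    assume h: "int q = int (d ! p) - int p"
    then have xs: "x = s" unfolding x_def s_def by linarith
    show V unfolding V_def using x1 part rank xs s_def by auto
  next
    assume V
    then have sD: "s \<in> D" unfolding V_def D_def s_def using q by auto
    have part2: "card {y \<in> D. y < s} + card {i \<in> I. i < s} = s - 1"
    proof -
      have "{y \<in> D. y < s} \<union> {i \<in> I. i < s} = {1..<s}" unfolding D_def using Isub \<open>V\<close> V_def by auto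
      moreover have "{y \<in> D. y < s} \<inter> {i \<in> I. i < s} = {}" unfolding D_def by auto
      ultimately show ?thesis using fD fI
        by (metis (no_types, lifting) card_Un_disjoint card_atLeastLessThan finite_Un finite_atLeastLessThan)
    qed
    then have rs: "card {y \<in> D. y < s} = p" using \<open>V\<close> unfolding V_def s_def using q by auto
    obtain j where j: "j < length d" "d ! j = s" using sD setd by (metis in_set_conv_nth)
    have "card {y \<in> D. y < d ! j} = j" using rank_nth[OF sd j(1)] setd by simp
    then have "j = p" using rs j by simp
    then show "int q = int (d ! p) - int p" using j s_def by simp
  qed
  show ?thesis
  proof (cases V)
    case False
    then show ?thesis unfolding pure_entry_def Let_def d_def[symmetric] using cond V_def s_def by auto
  next
    case True
    have cq: "int q = int (d ! p) - int p" using cond True by simp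
    then have xs: "x = s" unfolding x_def s_def by linarith
    have sI: "s \<notin> I" "s \<le> r" "1 \<le> s" using True q unfolding V_def s_def by auto
    have bij: "bij_betw ((!) d) ({..<length d} - {p}) (D - {x})"
      unfolding x_def
      by (rule bij_betw_DiffI) (use bij_betw_nth[OF dist refl setd[symmetric]] plt in \<open>auto simp: bij_betw_def\<close>)
    have idx: "{0..r-n} = {..<length d}" using ld by auto
    have P1: "(\<Prod>l\<in>{0..r-n} - {p}. 1 / \<bar>real (d ! l) - real (d ! p)\<bar>) = (\<Prod>y\<in>D - {s}. 1 / \<bar>real y - real s\<bar>)"
      unfolding idx using prod.reindex_bij_betw[OF bij, of "\<lambda>y. 1 / \<bar>real y - real s\<bar>"] xs x_def by simp
    have P2: "(\<Prod>y\<in>D - {s}. \<bar>real y - real s\<bar>) * (\<Prod>i\<in>I. \<bar>real i - real s\<bar>) = fact (s - 1) * fact (r - s)"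
    proof -
      have e: "{1..r} - {s} = (D - {s}) \<union> I" unfolding D_def using Isub sI by auto
      have "(\<Prod>x\<in>(D - {s}) \<union> I. \<bar>real x - real s\<bar>) = (\<Prod>y\<in>D - {s}. \<bar>real y - real s\<bar>) * (\<Prod>i\<in>I. \<bar>real i - real s\<bar>)"
        by (rule prod.union_disjoint) (use fD fI in \<open>auto simp: D_def\<close>)
      then have "(\<Prod>x\<in>{1..r} - {s}. \<bar>real x - real s\<bar>) = (\<Prod>y\<in>D - {s}. \<bar>real y - real s\<bar>) * (\<Prod>i\<in>I. \<bar>real i - real s\<bar>)"
        unfolding e .
      then show ?thesis using prod_dist_fact[OF sI(3) sI(2)] by simp
    qed
    have Tpos: "(\<Prod>i\<in>I. \<bar>real i - real s\<bar>) > 0" using sI by (intro prod_pos) auto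
    have P3: "(\<Prod>y\<in>D - {s}. 1 / \<bar>real y - real s\<bar>) = (\<Prod>i\<in>I. \<bar>real i - real s\<bar>) / (fact (s - 1) * fact (r - s))"
    proof -
      have "(\<Prod>y\<in>D - {s}. 1 / \<bar>real y - real s\<bar>) = 1 / (\<Prod>y\<in>D - {s}. \<bar>real y - real s\<bar>)"
        by (simp add: prod_dividef)
      also have "\<dots> = (\<Prod>i\<in>I. \<bar>real i - real s\<bar>) / (fact (s - 1) * fact (r - s))"
      proof -
        have "(\<Prod>y\<in>D - {s}. \<bar>real y - real s\<bar>) = fact (s - 1) * fact (r - s) / (\<Prod>i\<in>I. \<bar>real i - real s\<bar>)"
          using P2 Tpos by (simp add: eq_divide_eq)
        then show ?thesis by simp
      qed
      finally show ?thesis .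
    qed
    have "int q = int (d ! p) - int p" using cond True by simp
    then show ?thesis unfolding pure_entry_def Let_def d_def[symmetric] using True P1 P3
      unfolding V_def s_def by simp
  qed
qed



definition esym :: "nat \<Rightarrow> 'a set \<Rightarrow> ('a \<Rightarrow> real) \<Rightarrow> real" where
  "esym k A f = (\<Sum>B\<in>{B. B \<subseteq> A \<and> card B = k}. \<Prod>b\<in>B. f b)"

lemma esym_0: "finite A \<Longrightarrow> esym 0 A f = 1"
proof -
  assume "finite A"
  then have "{B. B \<subseteq> A \<and> card B = 0} = {{}}"
    by (auto dest: finite_subset[where B=A] simp: card_eq_0_iff)
  then show ?thesis unfolding esym_def by simp
qed

lemma esym_empty: "esym (Suc k) {} f = 0"
  unfolding esym_def by simp

lemma esym_insert:
  assumes A: "finite A" and x: "x \<notin> A"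
  shows "esym (Suc k) (insert x A) f = esym (Suc k) A f + f x * esym k A f"
proof -
  let ?P = "{B. B \<subseteq> A \<and> card B = Suc k}"
  let ?Q = "{B. B \<subseteq> A \<and> card B = k}"
  have eq: "{B. B \<subseteq> insert x A \<and> card B = Suc k} = ?P \<union> insert x ` ?Q"
  proof (intro set_eqI iffI)
    fix B assume B: "B \<in> {B. B \<subseteq> insert x A \<and> card B = Suc k}"
    have fB: "finite B" using B A by (auto intro: finite_subset)
    show "B \<in> ?P \<union> insert x ` ?Q"
    proof (cases "x \<in> B")
      case True
      then have "B = insert x (B - {x})" by auto
      moreover have "B - {x} \<in> ?Q" using B True fB by auto
      ultimately show ?thesis by blast
    next
      case False then show ?thesis using B by auto
    qed
  next
    fix B assume "B \<in> ?P \<union> insert x ` ?Q"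
    then show "B \<in> {B. B \<subseteq> insert x A \<and> card B = Suc k}"
    proof
      assume "B \<in> ?P" then show ?thesis by auto
    next
      assume "B \<in> insert x ` ?Q"
      then obtain C where C: "C \<subseteq> A" "card C = k" "B = insert x C" by auto
      have "finite C" using C A by (auto intro: finite_subset)
      moreover have "x \<notin> C" using C x by auto
      ultimately show ?thesis using C x by auto
    qed
  qed
  have fP: "finite ?P" "finite (insert x ` ?Q)" using A by auto
  have disj: "?P \<inter> insert x ` ?Q = {}" using x by auto
  have inj: "inj_on (insert x) ?Q"
  proof (rule inj_onI)
    fix B C assume "B \<in> ?Q" "C \<in> ?Q" "insert x B = insert x C"
    then show "B = C" using x by (metis insert_Diff_if insert_absorb subsetD Diff_insert_absorb mem_Collect_eq)
  qed
  have "esym (Suc k) (insert x A) f = (\<Sum>B\<in>?P. \<Prod>b\<in>B. f b) + (\<Sum>B\<in>insert x ` ?Q. \<Prod>b\<in>B. f b)"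
    unfolding esym_def eq by (rule sum.union_disjoint) (use fP disj in auto)
  also have "(\<Sum>B\<in>insert x ` ?Q. \<Prod>b\<in>B. f b) = (\<Sum>C\<in>?Q. \<Prod>b\<in>insert x C. f b)"
    by (rule sum.reindex[OF inj, unfolded comp_def])
  also have "\<dots> = (\<Sum>C\<in>?Q. f x * (\<Prod>b\<in>C. f b))"
  proof (rule sum.cong[OF refl])
    fix C assume "C \<in> ?Q"
    then have "finite C" "x \<notin> C" using A x by (auto intro: finite_subset)
    then show "(\<Prod>b\<in>insert x C. f b) = f x * (\<Prod>b\<in>C. f b)" by simp
  qed
  finally show ?thesis unfolding esym_def by (simp add: sum_distrib_left)
qed

lemma esym_nonneg: "(\<And>x. x \<in> A \<Longrightarrow> 0 \<le> f x) \<Longrightarrow> 0 \<le> esym k A f"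
  unfolding esym_def by (intro sum_nonneg prod_nonneg) auto

lemma bern_lower:
  fixes a b :: real assumes "0 \<le> a" "0 \<le> b"
  shows "a ^ Suc j + real (Suc j) * b * a ^ j \<le> (a + b) ^ Suc j"
proof (induction j)
  case 0 then show ?case by simp
next
  case (Suc j)
  have "(a + b) ^ Suc (Suc j) = (a + b) * (a + b) ^ Suc j" by simp
  also have "\<dots> \<ge> (a + b) * (a ^ Suc j + real (Suc j) * b * a ^ j)"
    using Suc assms by (intro mult_left_mono) auto
  finally have "(a + b) ^ Suc (Suc j) \<ge> (a + b) * (a ^ Suc j + real (Suc j) * b * a ^ j)" .
  moreover have "(a + b) * (a ^ Suc j + real (Suc j) * b * a ^ j) =
      a ^ Suc (Suc j) + real (Suc (Suc j)) * b * a ^ Suc j + real (Suc j) * b * b * a ^ j"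
    by (simp add: algebra_simps)
  moreover have "0 \<le> real (Suc j) * b * b * a ^ j" using assms by simp
  ultimately show ?case by linarith
qed

lemma pow_diff_upper:
  fixes x y :: real assumes "0 \<le> x" "x \<le> y"
  shows "y ^ Suc j \<le> x ^ Suc j + real (Suc j) * (y - x) * y ^ j"
proof (induction j)
  case 0 then show ?case by simp
next
  case (Suc j)
  have "y ^ Suc (Suc j) - x ^ Suc (Suc j) = y * (y ^ Suc j - x ^ Suc j) + x ^ Suc j * (y - x)"
    by (simp add: algebra_simps)
  also have "\<dots> \<le> y * (real (Suc j) * (y - x) * y ^ j) + y ^ Suc j * (y - x)"
    using Suc assms by (intro add_mono mult_left_mono mult_right_mono power_mono) auto
  also have "\<dots> = real (Suc (Suc j)) * (y - x) * y ^ Suc j" by (simp add: algebra_simps)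
  finally show ?case by linarith
qed

lemma pow_step:
  fixes x y e :: real assumes "0 \<le> x" "0 \<le> y" "y - x \<le> e" "0 \<le> e"
  shows "y ^ Suc j \<le> x ^ Suc j + real (Suc j) * e * y ^ j"
proof (cases "x \<le> y")
  case True
  have "y ^ Suc j \<le> x ^ Suc j + real (Suc j) * (y - x) * y ^ j" by (rule pow_diff_upper) (use assms True in auto)
  also have "\<dots> \<le> x ^ Suc j + real (Suc j) * e * y ^ j"
    using assms by (intro add_left_mono mult_right_mono mult_left_mono) auto
  finally show ?thesis .
next
  case False
  then have "y ^ Suc j \<le> x ^ Suc j" using assms by (intro power_mono) auto
  moreover have "0 \<le> real (Suc j) * e * y ^ j" using assms by simp
  ultimately show ?thesis by linarith
qed

lemma esym_upper:
  assumes "finite A" "\<And>x. x \<in> A \<Longrightarrow> 0 \<le> f x"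
  shows "fact k * esym k A f \<le> (\<Sum>x\<in>A. f x) ^ k"
  using assms
proof (induction A arbitrary: k rule: finite_induct)
  case empty then show ?case by (cases k) (auto simp: esym_0 esym_empty)
next
  case (insert x A)
  show ?case
  proof (cases k)
    case 0 then show ?thesis using insert by (simp add: esym_0)
  next
    case (Suc j)
    let ?S = "\<Sum>x\<in>A. f x"
    have S0: "0 \<le> ?S" using insert by (intro sum_nonneg) auto
    have fx: "0 \<le> f x" using insert by auto
    have IH1: "fact (Suc j) * esym (Suc j) A f \<le> ?S ^ Suc j" by (rule insert.IH) (use insert.prems in auto)
    have IH2: "fact j * esym j A f \<le> ?S ^ j" by (rule insert.IH) (use insert.prems in auto)
    have "fact (Suc j) * esym (Suc j) (insert x A) f =
        fact (Suc j) * esym (Suc j) A f + real (Suc j) * f x * (fact j * esym j A f)"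
      using insert by (simp add: esym_insert algebra_simps)
    also have "\<dots> \<le> ?S ^ Suc j + real (Suc j) * f x * ?S ^ j"
      using IH1 IH2 fx by (intro add_mono mult_left_mono) auto
    also have "\<dots> \<le> (?S + f x) ^ Suc j" by (rule bern_lower[OF S0 fx])
    finally show ?thesis using insert Suc by (simp add: add.commute)
  qed
qed

lemma esym_lower:
  assumes "finite A" "\<And>x. x \<in> A \<Longrightarrow> 0 \<le> f x" "\<And>x. x \<in> A \<Longrightarrow> f x \<le> D" "0 \<le> D"
  shows "(max 0 ((\<Sum>x\<in>A. f x) - real k * D)) ^ k \<le> fact k * esym k A f"
  using assms
proof (induction A arbitrary: k rule: finite_induct)
  case empty then show ?case by (cases k) (auto simp: esym_0 esym_empty)
next
  case (insert x A)
  show ?case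
  proof (cases k)
    case 0 then show ?thesis using insert by (simp add: esym_0)
  next
    case (Suc j)
    let ?S = "\<Sum>x\<in>A. f x"
    define A0 where "A0 = max 0 (?S - real (Suc j) * D)"
    define B where "B = max 0 (?S - real j * D)"
    define A' where "A' = max 0 ((?S + f x) - real (Suc j) * D)"
    have fx: "0 \<le> f x" "f x \<le> D" using insert by auto
    have IH1: "A0 ^ Suc j \<le> fact (Suc j) * esym (Suc j) A f" unfolding A0_def by (rule insert.IH) (use insert.prems in auto)
    have IH2: "B ^ j \<le> fact j * esym j A f" unfolding B_def by (rule insert.IH) (use insert.prems in auto)
    have AB: "A' \<le> B" using fx unfolding A'_def B_def by (auto simp: algebra_simps)
    have "A' ^ Suc j \<le> A0 ^ Suc j + real (Suc j) * f x * A' ^ j"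
      by (rule pow_step) (use fx in \<open>auto simp: A0_def A'_def\<close>)
    also have "\<dots> \<le> A0 ^ Suc j + real (Suc j) * f x * B ^ j"
      using AB fx by (intro add_left_mono mult_left_mono power_mono) (auto simp: A'_def)
    also have "\<dots> \<le> fact (Suc j) * esym (Suc j) A f + real (Suc j) * f x * (fact j * esym j A f)"
      using IH1 IH2 fx by (intro add_mono mult_left_mono) auto
    also have "\<dots> = fact (Suc j) * esym (Suc j) (insert x A) f"
      using insert by (simp add: esym_insert algebra_simps)
    finally show ?thesis using insert Suc unfolding A'_def by (simp add: add.commute)
  qed
qed



lemma valid_sum:
  assumes q: "1 \<le> q" "q \<le> n" and s: "s \<le> r"
  defines "V \<equiv> {I \<in> subsets_idx n r. s \<notin> I \<and> card {i\<in>I. i < s} = q - 1}"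
  shows "(\<Sum>I\<in>V. \<Prod>i\<in>I. \<bar>real i - real s\<bar>) =
     esym (q - 1) {1..<s} (\<lambda>x. real s - real x) * esym (n - q) {s<..r} (\<lambda>x. real x - real s)"
proof -
  let ?P1 = "{A. A \<subseteq> {1..<s} \<and> card A = q - 1}"
  let ?P2 = "{B. B \<subseteq> {s<..r} \<and> card B = n - q}"
  have fin1: "finite A" if "A \<in> ?P1" for A using that by (auto intro: finite_subset)
  have fin2: "finite B" if "B \<in> ?P2" for B using that by (auto intro: finite_subset)
  have Veq: "V = (\<lambda>(A, B). A \<union> B) ` (?P1 \<times> ?P2)"
  proof (intro set_eqI iffI)
    fix I assume "I \<in> V"
    then have I: "I \<subseteq> {1..r}" "card I = n - 1" "s \<notin> I" "card {i\<in>I. i < s} = q - 1"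
      unfolding V_def subsets_idx_def by auto
    have fI: "finite I" using I(1) by (auto intro: finite_subset)
    define A where "A = {i\<in>I. i < s}"
    define B where "B = {i\<in>I. s < i}"
    have IAB: "I = A \<union> B"
    proof
      show "I \<subseteq> A \<union> B"
      proof
        fix i assume "i \<in> I"
        moreover then have "i \<noteq> s" using I(3) by auto
        then have "i < s \<or> s < i" by arith
        ultimately show "i \<in> A \<union> B" unfolding A_def B_def by blast
      qed
    qed (auto simp: A_def B_def)
    have "card I = card A + card B"
      unfolding IAB by (rule card_Un_disjoint) (use fI in \<open>auto simp: A_def B_def\<close>)
    then have "card B = n - q" using I q unfolding A_def by simp
    moreover have "A \<in> ?P1" using I unfolding A_def by auto
    moreover have "B \<subseteq> {s<..r}" using I unfolding B_def by auto
    ultimately show "I \<in> (\<lambda>(A, B). A \<union> B) ` (?P1 \<times> ?P2)" using IAB by blast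
  next
    fix I assume "I \<in> (\<lambda>(A, B). A \<union> B) ` (?P1 \<times> ?P2)"
    then obtain A B where AB: "A \<in> ?P1" "B \<in> ?P2" "I = A \<union> B" by auto
    have fA: "finite A" "finite B" using fin1[OF AB(1)] fin2[OF AB(2)] by auto
    have "card I = card A + card B"
    proof -
      have "A \<inter> B = {}"
      proof (rule ccontr)
        assume "A \<inter> B \<noteq> {}"
        then obtain x where "x \<in> A" "x \<in> B" by blast
        then have "x < s" "s < x" using AB(1,2) by auto
        then show False by simp
      qed
      then show ?thesis unfolding AB(3) by (rule card_Un_disjoint[OF fA])
    qed
    then have cI: "card I = n - 1" using AB q by simp
    have "{i\<in>I. i < s} = A" using AB by auto
    moreover have "I \<subseteq> {1..r}" using AB s by auto
    moreover have "s \<notin> I" using AB by auto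
    ultimately show "I \<in> V" unfolding V_def subsets_idx_def using cI AB(1) by simp
  qed
  have inj: "inj_on (\<lambda>(A, B). A \<union> B) (?P1 \<times> ?P2)"
  proof (rule inj_onI)
    fix x y assume hx: "x \<in> ?P1 \<times> ?P2" and hy: "y \<in> ?P1 \<times> ?P2"
      and e: "(\<lambda>(A, B). A \<union> B) x = (\<lambda>(A, B). A \<union> B) y"
    obtain A B where x: "x = (A, B)" by (cases x)
    obtain A' B' where y: "y = (A', B')" by (cases y)
    have h: "A \<in> ?P1" "B \<in> ?P2" "A' \<in> ?P1" "B' \<in> ?P2" "A \<union> B = A' \<union> B'"
      using hx hy e unfolding x y by auto
    have a1: "A = {i \<in> A \<union> B. i < s}" using h by auto
    have a2: "A' = {i \<in> A \<union> B. i < s}" unfolding h(5) using h by auto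
    have b1: "B = {i \<in> A \<union> B. s < i}" using h by auto
    have b2: "B' = {i \<in> A \<union> B. s < i}" unfolding h(5) using h by auto
    show "x = y" unfolding x y by (metis a1 a2 b1 b2)
  qed
  have "(\<Sum>I\<in>V. \<Prod>i\<in>I. \<bar>real i - real s\<bar>) =
      (\<Sum>(A, B)\<in>?P1 \<times> ?P2. \<Prod>i\<in>A \<union> B. \<bar>real i - real s\<bar>)"
    unfolding Veq by (subst sum.reindex[OF inj]) (simp add: case_prod_beta comp_def)
  also have "\<dots> = (\<Sum>(A, B)\<in>?P1 \<times> ?P2. (\<Prod>i\<in>A. real s - real i) * (\<Prod>i\<in>B. real i - real s))"
  proof (rule sum.cong[OF refl])
    fix x assume hx: "x \<in> ?P1 \<times> ?P2"
    obtain A B where x: "x = (A, B)" by (cases x)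
    have h: "A \<in> ?P1" "B \<in> ?P2" using hx x by auto
    have "(\<Prod>i\<in>A \<union> B. \<bar>real i - real s\<bar>) = (\<Prod>i\<in>A. \<bar>real i - real s\<bar>) * (\<Prod>i\<in>B. \<bar>real i - real s\<bar>)"
    proof (rule prod.union_disjoint)
      show "finite A" "finite B" using fin1[OF h(1)] fin2[OF h(2)] .
      show "A \<inter> B = {}"
      proof (rule ccontr)
        assume "A \<inter> B \<noteq> {}"
        then obtain x where "x \<in> A" "x \<in> B" by blast
        then have "x < s" "s < x" using h by auto
        then show False by simp
      qed
    qed
    also have "(\<Prod>i\<in>A. \<bar>real i - real s\<bar>) = (\<Prod>i\<in>A. real s - real i)"
      using h by (intro prod.cong) auto
    also have "(\<Prod>i\<in>B. \<bar>real i - real s\<bar>) = (\<Prod>i\<in>B. real i - real s)"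
      using h by (intro prod.cong) auto
    finally show "(case x of (A, B) \<Rightarrow> \<Prod>i\<in>A \<union> B. \<bar>real i - real s\<bar>) = (case x of (A, B) \<Rightarrow> (\<Prod>i\<in>A. real s - real i) * (\<Prod>i\<in>B. real i - real s))"
      unfolding x by simp
  qed
  also have "\<dots> = (\<Sum>A\<in>?P1. \<Sum>B\<in>?P2. (\<Prod>i\<in>A. real s - real i) * (\<Prod>i\<in>B. real i - real s))"
    by (rule sum.cartesian_product[symmetric])
  also have "\<dots> = esym (q - 1) {1..<s} (\<lambda>x. real s - real x) * esym (n - q) {s<..r} (\<lambda>x. real x - real s)"
    unfolding esym_def by (simp add: sum_product)
  finally show ?thesis .
qed



lemma fact_bounds:
  "real a ^ k * fact a \<le> (fact (a + k) :: real)" "(fact (a + k) :: real) \<le> real (a + k) ^ k * fact a"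
proof -
  have "real a ^ k * fact a \<le> (fact (a + k) :: real) \<and> (fact (a + k) :: real) \<le> real (a + k) ^ k * fact a"
  proof (induction k)
    case 0 then show ?case by simp
  next
    case (Suc k)
    have f: "(fact (a + Suc k) :: real) = real (a + k + 1) * fact (a + k)" by simp
    have l: "real a ^ Suc k * fact a = real a * (real a ^ k * fact a)" by simp
    have "real a * (real a ^ k * fact a) \<le> real (a + k + 1) * fact (a + k)"
      using Suc by (intro mult_mono) auto
    moreover have "real (a + k + 1) * fact (a + k) \<le> real (a + k + 1) * (real (a + k) ^ k * fact a)"
      using Suc by (intro mult_left_mono) auto
    moreover have "real (a + k + 1) * (real (a + k) ^ k * fact a) \<le> real (a + Suc k) ^ Suc k * fact a"
    proof -
      have "real (a + k) ^ k \<le> real (a + Suc k) ^ k" by (intro power_mono) auto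
      then have "real (a + k + 1) * (real (a + k) ^ k * fact a) \<le> real (a + k + 1) * (real (a + Suc k) ^ k * fact a)"
        by (intro mult_left_mono mult_right_mono) auto
      also have "\<dots> = real (a + Suc k) ^ Suc k * fact a" by simp
      finally show ?thesis .
    qed
    ultimately show ?case using f l by linarith
  qed
  then show "real a ^ k * fact a \<le> (fact (a + k) :: real)" "(fact (a + k) :: real) \<le> real (a + k) ^ k * fact a"
    by auto
qed

lemma lim_low: "(\<lambda>a::nat. ((real a - real k) / real a) ^ k) \<longlonglongrightarrow> 1"
proof -
  have "(\<lambda>a::nat. (1 - real k / real a) ^ k) \<longlonglongrightarrow> (1 - 0) ^ k"
    by (intro tendsto_intros)
  moreover have "eventually (\<lambda>a::nat. (1 - real k / real a) ^ k = ((real a - real k) / real a) ^ k) sequentially"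
    using eventually_gt_at_top[of 0] by eventually_elim (simp add: field_simps)
  ultimately show ?thesis by (simp add: tendsto_cong)
qed

lemma lim_up: "(\<lambda>a::nat. ((real a + real k) * (real a + real k + 1) / (real a)^2) ^ k) \<longlonglongrightarrow> 1"
proof -
  have "(\<lambda>a::nat. ((1 + real k / real a) * (1 + (real k + 1) / real a)) ^ k) \<longlonglongrightarrow> ((1 + 0) * (1 + 0)) ^ k"
    by (intro tendsto_intros)
  moreover have "eventually (\<lambda>a::nat. ((1 + real k / real a) * (1 + (real k + 1) / real a)) ^ k =
      ((real a + real k) * (real a + real k + 1) / (real a)^2) ^ k) sequentially"
    using eventually_gt_at_top[of 0] by eventually_elim (simp add: field_simps power2_eq_square)
  ultimately show ?thesis by (simp add: tendsto_cong)
qed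

lemma G_upper:
  fixes e :: real
  assumes a: "0 < a" and e: "fact k * e \<le> (real (a + k) * real (a + k + 1) / 2) ^ k"
  shows "e * fact a * 2 ^ k * fact k / (fact (a + k) * real a ^ k)
           \<le> ((real a + real k) * (real a + real k + 1) / (real a)^2) ^ k"
proof -
  let ?S = "real (a + k) * real (a + k + 1) / 2"
  have S0: "0 \<le> ?S" by simp
  have Fp: "(0::real) < fact (a + k)" by simp
  have fl: "real a ^ k * fact a \<le> (fact (a + k) :: real)" by (rule fact_bounds(1))
  have pos: "0 < real a ^ k * fact a" using a by simp
  have "e * fact a * 2 ^ k * fact k / (fact (a + k) * real a ^ k) =
      (fact k * e) * 2 ^ k * fact a / (fact (a + k) * real a ^ k)" by (simp add: algebra_simps)
  also have "\<dots> \<le> ?S ^ k * 2 ^ k * fact a / (fact (a + k) * real a ^ k)"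
    using e a by (intro divide_right_mono mult_right_mono) auto
  also have "\<dots> \<le> ?S ^ k * 2 ^ k * fact a / (real a ^ k * fact a * real a ^ k)"
    using fl pos a by (intro divide_left_mono mult_right_mono mult_pos_pos) auto
  also have "\<dots> = (2 * ?S) ^ k / (real a ^ k * real a ^ k)"
  proof -
    have "(2 * ?S) ^ k = 2 ^ k * ?S ^ k" by (simp only: power_mult_distrib)
    moreover have "(fact a :: real) \<noteq> 0" by simp
    ultimately show ?thesis by (simp add: field_simps)
  qed
  also have "\<dots> = ((2 * ?S) / (real a)^2) ^ k"
    by (simp only: power_divide power2_eq_square power_mult_distrib)
  also have "\<dots> = ((real a + real k) * (real a + real k + 1) / (real a)^2) ^ k"
  proof -
    have eq2: "2 * ?S = (real a + real k) * (real a + real k + 1)" by simp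
    show ?thesis by (simp only: eq2)
  qed
  finally show ?thesis .
qed

lemma T_nonneg:
  assumes "2 * k \<le> a"
  shows "0 \<le> real (a + k) * real (a + k + 1) / 2 - real k * real (a + k)"
proof -
  have "0 \<le> real a + 1 - real k" using assms by simp
  then have "0 \<le> real (a + k) * (real a + 1 - real k)" by simp
  moreover have "real (a + k) * real (a + k + 1) / 2 - real k * real (a + k) = real (a + k) * (real a + 1 - real k) / 2"
    by (simp add: field_simps)
  ultimately show ?thesis by simp
qed

lemma frac_aux2:
  fixes x y z w f :: real assumes "f \<noteq> 0"
  shows "(x * y) / (z * w) = y * x * f / (z * f * w)"
  using assms by (simp add: field_simps)

lemma G_lower:
  fixes e :: real
  assumes a: "0 < a" "2 * k \<le> a"
    and e: "(real (a + k) * real (a + k + 1) / 2 - real k * real (a + k)) ^ k \<le> fact k * e"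
  shows "((real a - real k) / real a) ^ k \<le> e * fact a * 2 ^ k * fact k / (fact (a + k) * real a ^ k)"
proof -
  let ?T = "real (a + k) * real (a + k + 1) / 2 - real k * real (a + k)"
  have T: "2 * ?T = real (a + k) * (real a + 1 - real k)" by (simp add: algebra_simps)
  have T0: "0 \<le> ?T"
  proof -
    have "0 \<le> real a + 1 - real k" using a by simp
    then have "0 \<le> real (a + k) * (real a + 1 - real k)" by simp
    moreover have "?T = real (a + k) * (real a + 1 - real k) / 2" using T by (simp add: field_simps)
    ultimately show ?thesis by simp
  qed
  have fu: "(fact (a + k) :: real) \<le> real (a + k) ^ k * fact a" by (rule fact_bounds(2))
  have Fp: "(0::real) < fact (a + k)" by simp
  have "((real a - real k) / real a) ^ k \<le> ((2 * ?T) / (real (a + k) * real a)) ^ k"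
  proof (intro power_mono)
    show "0 \<le> (real a - real k) / real a" using a by auto
    have "(real a - real k) / real a \<le> (real a + 1 - real k) / real a" using a by (intro divide_right_mono) auto
    also have "\<dots> = (2 * ?T) / (real (a + k) * real a)" unfolding T using a by simp
    finally show "(real a - real k) / real a \<le> (2 * ?T) / (real (a + k) * real a)" .
  qed
  also have "\<dots> = (2 ^ k * ?T ^ k) / (real (a + k) ^ k * real a ^ k)"
    by (simp only: power_divide power_mult_distrib)
  also have "\<dots> = ?T ^ k * 2 ^ k * fact a / (real (a + k) ^ k * fact a * real a ^ k)"
    by (rule frac_aux2) simp
  also have "\<dots> \<le> ?T ^ k * 2 ^ k * fact a / (fact (a + k) * real a ^ k)"
    using fu Fp T0 a by (intro divide_left_mono mult_right_mono mult_pos_pos) auto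
  also have "\<dots> \<le> (fact k * e) * 2 ^ k * fact a / (fact (a + k) * real a ^ k)"
    using e a by (intro divide_right_mono mult_right_mono) auto
  also have "\<dots> = e * fact a * 2 ^ k * fact k / (fact (a + k) * real a ^ k)" by (simp add: algebra_simps)
  finally show ?thesis .
qed

lemma G_close:
  fixes k :: nat and \<delta> :: real
  assumes "\<delta> > 0"
  shows "\<exists>A0::nat. \<forall>a\<ge>A0. \<forall>e::real.
     (max 0 (real (a + k) * real (a + k + 1) / 2 - real k * real (a + k))) ^ k \<le> fact k * e \<and>
     fact k * e \<le> (real (a + k) * real (a + k + 1) / 2) ^ k \<longrightarrow>
     \<bar>e * fact a * 2 ^ k * fact k / (fact (a + k) * real a ^ k) - 1\<bar> < \<delta>"
proof -
  have ev1: "eventually (\<lambda>a::nat. dist (((real a - real k) / real a) ^ k) 1 < \<delta>) sequentially"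
    using lim_low assms by (rule tendstoD)
  have ev2: "eventually (\<lambda>a::nat. dist (((real a + real k) * (real a + real k + 1) / (real a)^2) ^ k) 1 < \<delta>) sequentially"
    using lim_up assms by (rule tendstoD)
  have "eventually (\<lambda>a::nat. dist (((real a - real k) / real a) ^ k) 1 < \<delta> \<and>
       dist (((real a + real k) * (real a + real k + 1) / (real a)^2) ^ k) 1 < \<delta> \<and> 2 * k + 1 \<le> a) sequentially"
    using ev1 ev2 eventually_ge_at_top[of "2 * k + 1"] by eventually_elim auto
  then obtain A0 where A0: "\<And>a. a \<ge> A0 \<Longrightarrow> dist (((real a - real k) / real a) ^ k) 1 < \<delta> \<and>
       dist (((real a + real k) * (real a + real k + 1) / (real a)^2) ^ k) 1 < \<delta> \<and> 2 * k + 1 \<le> a"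
    unfolding eventually_sequentially by blast
  show ?thesis
  proof (intro exI allI impI)
    fix a e assume "A0 \<le> a" and h0: "(max 0 (real (a + k) * real (a + k + 1) / 2 - real k * real (a + k))) ^ k \<le> fact k * e \<and>
     fact k * e \<le> (real (a + k) * real (a + k + 1) / 2) ^ k"
    have "2 * k \<le> a" using A0[OF \<open>A0 \<le> a\<close>] by auto
    then have "max 0 (real (a + k) * real (a + k + 1) / 2 - real k * real (a + k)) = real (a + k) * real (a + k + 1) / 2 - real k * real (a + k)"
      using T_nonneg by (simp add: max_def)
    then have h: "(real (a + k) * real (a + k + 1) / 2 - real k * real (a + k)) ^ k \<le> fact k * e \<and>
     fact k * e \<le> (real (a + k) * real (a + k + 1) / 2) ^ k" using h0 by simp
    have d: "dist (((real a - real k) / real a) ^ k) 1 < \<delta>"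
      "dist (((real a + real k) * (real a + real k + 1) / (real a)^2) ^ k) 1 < \<delta>" "2 * k + 1 \<le> a"
      using A0[OF \<open>A0 \<le> a\<close>] by auto
    have l: "((real a - real k) / real a) ^ k \<le> e * fact a * 2 ^ k * fact k / (fact (a + k) * real a ^ k)"
      by (rule G_lower) (use h d in auto)
    have u: "e * fact a * 2 ^ k * fact k / (fact (a + k) * real a ^ k) \<le> ((real a + real k) * (real a + real k + 1) / (real a)^2) ^ k"
      by (rule G_upper) (use h d in auto)
    show "\<bar>e * fact a * 2 ^ k * fact k / (fact (a + k) * real a ^ k) - 1\<bar> < \<delta>"
      using l u d(1,2) unfolding dist_real_def by linarith
  qed
qed



lemma gauss_real: "(\<Sum>y\<in>{1..m}. real y) = real m * (real m + 1) / 2"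
  by (induction m) (auto simp: field_simps)

lemma sum1: "(\<Sum>x\<in>{1..<s}. real s - real x) = real (s - 1) * (real (s - 1) + 1) / 2"
proof -
  have "(\<Sum>x\<in>{1..<s}. real s - real x) = (\<Sum>y\<in>{1..s-1}. real y)"
    by (rule sum.reindex_bij_witness[where i="\<lambda>y. s - y" and j="\<lambda>x. s - x"]) auto
  then show ?thesis using gauss_real[of "s - 1"] by simp
qed

lemma sum2: "(\<Sum>x\<in>{s<..r}. real x - real s) = real (r - s) * (real (r - s) + 1) / 2"
proof -
  have "(\<Sum>x\<in>{s<..r}. real x - real s) = (\<Sum>y\<in>{1..r-s}. real y)"
    by (rule sum.reindex_bij_witness[where i="\<lambda>y. y + s" and j="\<lambda>x. x - s"]) auto
  then show ?thesis using gauss_real[of "r - s"] by simp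
qed

lemma esym1_bounds:
  assumes "M = s - 1"
  shows "(max 0 (real M * real (M + 1) / 2 - real k * real M)) ^ k \<le> fact k * esym k {1..<s} (\<lambda>x. real s - real x)"
    "fact k * esym k {1..<s} (\<lambda>x. real s - real x) \<le> (real M * real (M + 1) / 2) ^ k"
proof -
  have S: "(\<Sum>x\<in>{1..<s}. real s - real x) = real M * real (M + 1) / 2" using sum1[of s] assms by simp
  show "(max 0 (real M * real (M + 1) / 2 - real k * real M)) ^ k \<le> fact k * esym k {1..<s} (\<lambda>x. real s - real x)"
    using esym_lower[of "{1..<s}" "\<lambda>x. real s - real x" "real M" k] assms unfolding S by auto
  show "fact k * esym k {1..<s} (\<lambda>x. real s - real x) \<le> (real M * real (M + 1) / 2) ^ k"
    using esym_upper[of "{1..<s}" "\<lambda>x. real s - real x" k] unfolding S by auto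
qed

lemma esym2_bounds:
  assumes "M = r - s"
  shows "(max 0 (real M * real (M + 1) / 2 - real k * real M)) ^ k \<le> fact k * esym k {s<..r} (\<lambda>x. real x - real s)"
    "fact k * esym k {s<..r} (\<lambda>x. real x - real s) \<le> (real M * real (M + 1) / 2) ^ k"
proof -
  have S: "(\<Sum>x\<in>{s<..r}. real x - real s) = real M * real (M + 1) / 2" using sum2[of s r] assms by simp
  show "(max 0 (real M * real (M + 1) / 2 - real k * real M)) ^ k \<le> fact k * esym k {s<..r} (\<lambda>x. real x - real s)"
    using esym_lower[of "{s<..r}" "\<lambda>x. real x - real s" "real M" k] assms unfolding S by auto
  show "fact k * esym k {s<..r} (\<lambda>x. real x - real s) \<le> (real M * real (M + 1) / 2) ^ k"
    using esym_upper[of "{s<..r}" "\<lambda>x. real x - real s" k] unfolding S by auto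
qed



lemma prod_close:
  fixes x y d :: real
  assumes "\<bar>x - 1\<bar> < d" "\<bar>y - 1\<bar> < d" "d \<le> 1"
  shows "\<bar>x * y - 1\<bar> \<le> 3 * d"
proof -
  have e: "x * y - 1 = (x - 1) * y + (y - 1)" by (simp add: algebra_simps)
  have y2: "\<bar>y\<bar> \<le> 2" using assms by linarith
  have "\<bar>(x - 1) * y\<bar> \<le> d * 2" unfolding abs_mult
    using assms y2 by (intro mult_mono) auto
  then show ?thesis unfolding e using assms by linarith
qed

lemma ratio_alg:
  fixes Fab Fa1 Fb2 Fa Fb f1 f2 P1 P2 Q1 Q2 e1 e2 :: real
  assumes "Fab \<noteq> 0" "Fa1 \<noteq> 0" "Fb2 \<noteq> 0" "Fa \<noteq> 0" "Fb \<noteq> 0" "f1 \<noteq> 0" "f2 \<noteq> 0"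
    "P1 \<noteq> 0" "P2 \<noteq> 0" "Q1 \<noteq> 0" "Q2 \<noteq> 0"
  shows "(Fab / (Fa1 * Fb2) * (e1 * e2) / 2) / ((Fab / (Fa * Fb)) * (1 / (2 * Q1 * Q2) * (P1 * P2) / (f1 * f2)))
     = (e1 * Fa * Q1 * f1 / (Fa1 * P1)) * (e2 * Fb * Q2 * f2 / (Fb2 * P2))"
  using assms by (simp add: field_simps)

lemma Qbound_alg:
  fixes Fab Fa1 Fb2 Fa Fb F P1 P2 Qn R1 L c0 :: real
  assumes pos: "0 < Fab" "0 < Fa1" "0 < Fb2" "0 < Fa" "0 < Fb" "0 < F" "0 < Qn" "0 < R1" "0 < c0"
    and P: "0 \<le> P1" "0 \<le> P2"
    and f1: "P1 * Fa \<le> Fa1" and f2: "P2 * Fb \<le> Fb2"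
    and L: "0 < L" "L \<le> P1 * P2" "L * L = c0 * R1 * R1"
  shows "Fab / (Fa1 * Fb2) * R1 / ((Fab / (Fa * Fb)) * (1 / Qn * (P1 * P2) / F)) \<le> Qn * F / (c0 * R1)"
proof -
  have Z: "0 < P1 * P2" using L by linarith
  have e: "Fab / (Fa1 * Fb2) * R1 / ((Fab / (Fa * Fb)) * (1 / Qn * (P1 * P2) / F))
      = (R1 * Qn * F) / ((Fa1 * Fb2) / (Fa * Fb) * (P1 * P2))"
    using pos Z by (simp add: field_simps)
  have "(P1 * P2) * (P1 * P2) \<le> (Fa1 * Fb2) / (Fa * Fb) * (P1 * P2)"
  proof (rule mult_right_mono)
    have "P1 * P2 * (Fa * Fb) = (P1 * Fa) * (P2 * Fb)" by (simp add: algebra_simps)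
    also have "\<dots> \<le> Fa1 * Fb2"
    proof (rule mult_mono[OF f1 f2])
      show "0 \<le> Fa1" using pos by simp
      have "0 \<le> P1 * P2 * (Fa * Fb)" using Z pos by simp
      show "0 \<le> P2 * Fb" using pos P by simp
    qed
    finally show "P1 * P2 \<le> Fa1 * Fb2 / (Fa * Fb)" using pos by (simp add: field_simps)
  qed (use Z in simp)
  moreover have "L * L \<le> (P1 * P2) * (P1 * P2)" using L by (intro mult_mono) auto
  ultimately have D: "c0 * R1 * R1 \<le> (Fa1 * Fb2) / (Fa * Fb) * (P1 * P2)" using L by linarith
  have "(R1 * Qn * F) / ((Fa1 * Fb2) / (Fa * Fb) * (P1 * P2)) \<le> (R1 * Qn * F) / (c0 * R1 * R1)"
  proof (rule divide_left_mono[OF D])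
    have c: "0 < c0 * R1 * R1" using pos by simp
    then have "0 < (Fa1 * Fb2) / (Fa * Fb) * (P1 * P2)" using D by linarith
    then show "0 < (Fa1 * Fb2) / (Fa * Fb) * (P1 * P2) * (c0 * R1 * R1)" using c by (rule mult_pos_pos)
    show "0 \<le> R1 * Qn * F" using pos by simp
  qed
  also have "\<dots> = Qn * F / (c0 * R1)" using pos by (simp add: field_simps)
  finally show ?thesis unfolding e .
qed



theorem mainTheorem5:
  fixes n q :: nat and c :: real
  assumes "n \<ge> 2" and "1 \<le> q" and "q \<le> n" and "0 < c" and "c < 1/2"
  shows "\<forall>\<epsilon>>0. \<forall>\<eta>>0. \<exists>R::nat. \<forall>r\<ge>R. \<forall>p::nat.
           p \<le> r - n \<and> c \<le> real p / real r \<and> real p / real r \<le> 1 - c \<longrightarrow>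
           measure (rand_space n r)
             {X \<in> space (rand_space n r).
                \<bar>betti_entry n r X p q / (real ((r - n) choose p) * mu n q r p) - 1\<bar> > \<epsilon>} < \<eta>"
proof (intro allI impI)
  fix \<epsilon> \<eta> :: real assume \<epsilon>: "0 < \<epsilon>" and \<eta>: "0 < \<eta>"
  note n2 = assms(1) and q1 = assms(2) and qn = assms(3) and c0' = assms(4) and ch = assms(5)
  define k1 where "k1 = q - 1"
  define k2 where "k2 = n - q"
  have nk: "n = k1 + k2 + 1" using q1 qn unfolding k1_def k2_def by simp
  define \<delta> where "\<delta> = min (1/6) (\<epsilon>/6)"
  have \<delta>: "0 < \<delta>" "\<delta> \<le> 1/6" "3 * \<delta> \<le> \<epsilon> / 2" using \<epsilon> unfolding \<delta>_def by auto
  obtain A1 :: nat where A1: "\<forall>a\<ge>A1. \<forall>e::real.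
     (max 0 (real (a + k1) * real (a + k1 + 1) / 2 - real k1 * real (a + k1))) ^ k1 \<le> fact k1 * e \<and>
     fact k1 * e \<le> (real (a + k1) * real (a + k1 + 1) / 2) ^ k1 \<longrightarrow>
     \<bar>e * fact a * 2 ^ k1 * fact k1 / (fact (a + k1) * real a ^ k1) - 1\<bar> < \<delta>"
    using G_close[OF \<delta>(1), of k1] by blast
  obtain A2 :: nat where A2: "\<forall>a\<ge>A2. \<forall>e::real.
     (max 0 (real (a + k2) * real (a + k2 + 1) / 2 - real k2 * real (a + k2))) ^ k2 \<le> fact k2 * e \<and>
     fact k2 * e \<le> (real (a + k2) * real (a + k2 + 1) / 2) ^ k2 \<longrightarrow>
     \<bar>e * fact a * 2 ^ k2 * fact k2 / (fact (a + k2) * real a ^ k2) - 1\<bar> < \<delta>"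
    using G_close[OF \<delta>(1), of k2] by blast
  define c0 where "c0 = (c / 2) ^ (2 * (n - 1))"
  define C0 where "C0 = 2 ^ n * (fact k1 * fact k2) / c0"
  have c0pos: "0 < c0" unfolding c0_def using c0' by simp
  have C0pos: "0 < C0" unfolding C0_def using c0pos by simp
  define R where "R = nat \<lceil>2 * (real A1 + real A2 + real n + 1) / c + 4 * C0 / (\<epsilon>^2 * \<eta>)\<rceil> + n + 1"
  show "\<exists>R::nat. \<forall>r\<ge>R. \<forall>p::nat.
           p \<le> r - n \<and> c \<le> real p / real r \<and> real p / real r \<le> 1 - c \<longrightarrow>
           measure (rand_space n r)
             {X \<in> space (rand_space n r).
                \<bar>betti_entry n r X p q / (real ((r - n) choose p) * mu n q r p) - 1\<bar> > \<epsilon>} < \<eta>"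
  proof (rule exI[of _ R], intro allI impI)
    fix r p :: nat
    assume rR: "R \<le> r" and hp: "p \<le> r - n \<and> c \<le> real p / real r \<and> real p / real r \<le> 1 - c"
    have rge: "2 * (real A1 + real A2 + real n + 1) / c + 4 * C0 / (\<epsilon>^2 * \<eta>) \<le> real r"
    proof -
      have "2 * (real A1 + real A2 + real n + 1) / c + 4 * C0 / (\<epsilon>^2 * \<eta>)
          \<le> real (nat \<lceil>2 * (real A1 + real A2 + real n + 1) / c + 4 * C0 / (\<epsilon>^2 * \<eta>)\<rceil>)"
        by (rule real_nat_ceiling_ge)
      also have "\<dots> \<le> real r"
      proof (rule of_nat_mono)
        show "nat \<lceil>2 * (real A1 + real A2 + real n + 1) / c + 4 * C0 / (\<epsilon>^2 * \<eta>)\<rceil> \<le> r"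
          using rR unfolding R_def by linarith
      qed
      finally show ?thesis .
    qed
    have nr: "n < r" using rR unfolding R_def by simp
    have r0: "0 < real r" using nr by simp
    have pc: "c * real r \<le> real p" using hp r0 by (simp add: pos_le_divide_eq)
    have pc2: "real p \<le> (1 - c) * real r" using hp r0 by (simp add: pos_divide_le_eq)
    have t2: "0 \<le> 4 * C0 / (\<epsilon>^2 * \<eta>)" using C0pos \<epsilon> \<eta> by simp
    have cr: "2 * (real A1 + real A2 + real n + 1) \<le> c * real r"
    proof -
      have "2 * (real A1 + real A2 + real n + 1) / c \<le> real r" using rge t2 by linarith
      then show ?thesis using c0' by (simp add: pos_divide_le_eq mult.commute)
    qed
    have "p \<le> r - n" using hp by simp
    then have pn: "p + n \<le> r" using nr by arith
    define b where "b = r - p - n"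
    have bre: "real b = real r - real p - real n" unfolding b_def using pn by simp
    have bge: "c * real r / 2 \<le> real b" using bre pc2 cr by (simp add: algebra_simps)
    have "0 \<le> c * real r" using c0' r0 by simp
    then have pge: "c * real r / 2 \<le> real p" using pc by linarith
    have pA1: "A1 \<le> p" using pc cr by simp
    have bA2: "A2 \<le> b" using bge cr by simp
    have p0: "0 < p" using pc cr by simp
    have b0: "0 < b" using bge cr by simp
    define s where "s = p + q"
    have s1: "s - 1 = p + k1" unfolding s_def k1_def using q1 by simp
    have s2: "r - s = b + k2" unfolding s_def b_def k2_def using qn pn by simp
    have srn: "r - n = p + b" unfolding b_def using pn by simp
    have sr: "s \<le> r" unfolding s_def using qn pn by simp
    have s1r: "1 \<le> s" unfolding s_def using q1 by simp
    define S where "S = subsets_idx n r"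
    have finS: "finite S"
    proof -
      have "S \<subseteq> Pow {1..r}" unfolding S_def subsets_idx_def by auto
      then show ?thesis by (rule finite_subset) simp
    qed
    define V where "V = {I \<in> S. s \<notin> I \<and> card {i\<in>I. i < s} = q - 1}"
    define T where "T I = (\<Prod>i\<in>I. \<bar>real i - real s\<bar>)" for I
    define K :: real where "K = fact (r - n) / (fact (s - 1) * fact (r - s))"
    define w where "w I = pure_entry n r I p q" for I
    have w_eq: "w I = (if I \<in> V then K * T I else 0)" if "I \<in> S" for I
    proof -
      have "w I = (if p + q \<notin> I \<and> card {i\<in>I. i < p + q} = q - 1 \<and> p + q \<le> r
        then fact (r - n) / (fact (p + q - 1) * fact (r - (p + q))) * (\<Prod>i\<in>I. \<bar>real i - real (p + q)\<bar>)
        else 0)"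
        unfolding w_def by (rule pure_entry_eval) (use that n2 nr hp q1 in \<open>auto simp: S_def\<close>)
      then show ?thesis using that sr unfolding V_def T_def K_def s_def by auto
    qed
    define e1 where "e1 = esym k1 {1..<s} (\<lambda>x. real s - real x)"
    define e2 where "e2 = esym k2 {s<..r} (\<lambda>x. real x - real s)"
    have Kpos: "0 < K" unfolding K_def by simp
    have W: "(\<Sum>I\<in>S. w I) = K * (e1 * e2)"
    proof -
      have "(\<Sum>I\<in>S. w I) = (\<Sum>I\<in>S. if I \<in> V then K * T I else 0)"
        using w_eq by (intro sum.cong) auto
      also have "\<dots> = (\<Sum>I\<in>V. K * T I)"
        unfolding V_def using finS by (simp add: sum.inter_filter)
      also have "\<dots> = K * (\<Sum>I\<in>V. T I)" by (simp add: sum_distrib_left)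
      also have "(\<Sum>I\<in>V. T I) = e1 * e2"
        unfolding T_def V_def S_def e1_def e2_def k1_def k2_def by (rule valid_sum[OF q1 qn sr])
      finally show ?thesis .
    qed
    have T_le: "T I \<le> real r ^ (n - 1)" if "I \<in> S" for I
    proof -
      have I: "I \<subseteq> {1..r}" "card I = n - 1" using that unfolding S_def subsets_idx_def by auto
      have "T I \<le> (\<Prod>i\<in>I. real r)" unfolding T_def
      proof (rule prod_mono)
        fix i assume "i \<in> I"
        then have "1 \<le> i" "i \<le> r" using I by auto
        then show "0 \<le> \<bar>real i - real s\<bar> \<and> \<bar>real i - real s\<bar> \<le> real r" using sr s1r by auto
      qed
      then show ?thesis using I by simp
    qed
    have T_nn: "0 \<le> T I" for I unfolding T_def by (simp add: prod_nonneg)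
    have w_nn: "0 \<le> w I" if "I \<in> S" for I using w_eq[OF that] Kpos T_nn by simp
    have w_le: "w I \<le> K * real r ^ (n - 1)" if "I \<in> S" for I
      using w_eq[OF that] Kpos T_le[OF that] T_nn by (auto intro: mult_left_mono)
    have sq: "(\<Sum>I\<in>S. (w I)^2) \<le> K * real r ^ (n - 1) * (\<Sum>I\<in>S. w I)"
    proof -
      have "(\<Sum>I\<in>S. (w I)^2) \<le> (\<Sum>I\<in>S. K * real r ^ (n - 1) * w I)"
        by (rule sum_mono) (use w_le w_nn in \<open>auto simp: power2_eq_square intro: mult_right_mono\<close>)
      then show ?thesis by (simp add: sum_distrib_left)
    qed
    define N where "N = real ((r - n) choose p) * mu n q r p"
    define G1 where "G1 = e1 * fact p * 2 ^ k1 * fact k1 / (fact (p + k1) * real p ^ k1)"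
    define G2 where "G2 = e2 * fact b * 2 ^ k2 * fact k2 / (fact (b + k2) * real b ^ k2)"
    have G1: "\<bar>G1 - 1\<bar> < \<delta>"
      unfolding G1_def e1_def
      using A1[rule_format, OF pA1] esym1_bounds[OF s1[symmetric], of k1] by simp
    have G2: "\<bar>G2 - 1\<bar> < \<delta>"
      unfolding G2_def e2_def
      using A2[rule_format, OF bA2] esym2_bounds[OF s2[symmetric], of k2] by simp
    have pow2: "(2::real) ^ n = 2 * 2 ^ k1 * 2 ^ k2" unfolding nk by (simp add: power_add)
    have mu_eq: "mu n q r p = 1 / (2 * 2 ^ k1 * 2 ^ k2) * (real p ^ k1 * real b ^ k2) / (fact k1 * fact k2)"
    proof -
      have "mu n q r p = 1 / 2 ^ n * (real p ^ k1 * real b ^ k2) / (fact k1 * fact k2)"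
        unfolding mu_def k1_def k2_def b_def by simp
      then show ?thesis by (simp only: pow2)
    qed
    have binom_eq: "real ((r - n) choose p) = fact (p + b) / (fact p * fact b)"
      using binomial_fact[of p "r - n"] srn by simp
    have K_eq: "K = fact (p + b) / (fact (p + k1) * fact (b + k2))" unfolding K_def srn s1 s2 ..
    have ratio: "(\<Sum>I\<in>S. w I) / 2 / N = G1 * G2"
      unfolding W N_def mu_eq binom_eq K_eq G1_def G2_def
      by (rule ratio_alg) (use p0 b0 in auto)
    have mN: "\<bar>(\<Sum>I\<in>S. w I) / 2 / N - 1\<bar> \<le> 3 * \<delta>"
      unfolding ratio by (rule prod_close[OF G1 G2]) (use \<delta> in auto)
    have Npos: "0 < N" unfolding N_def mu_eq using p0 b0 pn by (simp add: zero_less_binomial_iff)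
    define R1 where "R1 = real r ^ (n - 1)"
    have R1r: "real r \<le> R1"
    proof -
      have "real r ^ 1 \<le> real r ^ (n - 1)" using n2 nr by (intro power_increasing) auto
      then show ?thesis unfolding R1_def by simp
    qed
    have Qb: "K * R1 / N \<le> C0 / real r"
    proof -
      define L where "L = (c * real r / 2) ^ (n - 1)"
      have Lpos: "0 < L" unfolding L_def using c0' r0 by simp
      have LP: "L \<le> real p ^ k1 * real b ^ k2"
      proof -
        have "L = (c * real r / 2) ^ k1 * (c * real r / 2) ^ k2" unfolding L_def nk by (simp add: power_add)
        also have "\<dots> \<le> real p ^ k1 * real b ^ k2"
          using pge bge c0' r0 by (intro mult_mono power_mono) auto
        finally show ?thesis .
      qed
      have LL: "L * L = c0 * R1 * R1"
      proof -
        have a: "L = (c / 2) ^ (n - 1) * real r ^ (n - 1)" unfolding L_def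
          by (simp add: power_mult_distrib[symmetric] mult.commute)
        have b: "c0 = (c / 2) ^ (n - 1) * (c / 2) ^ (n - 1)" unfolding c0_def
          by (simp add: mult_2 power_add)
        show ?thesis unfolding a b R1_def by (simp add: algebra_simps)
      qed
      have "K * R1 / N \<le> 2 ^ n * (fact k1 * fact k2) / (c0 * R1)"
        unfolding K_eq N_def binom_eq mu_eq pow2
        by (rule Qbound_alg[where L=L])
           (use p0 b0 c0pos LP LL Lpos fact_bounds(1)[of p k1] fact_bounds(1)[of b k2] R1r r0 in \<open>auto simp: pow2\<close>)
      also have "\<dots> = C0 / R1" unfolding C0_def by simp
      also have "\<dots> \<le> C0 / real r" using R1r r0 C0pos by (intro divide_left_mono) auto
      finally show ?thesis .
    qed
    have mN2: "\<bar>(\<Sum>I\<in>S. w I) / 2 - N\<bar> \<le> \<epsilon> / 2 * N"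
    proof -
      have "\<bar>(\<Sum>I\<in>S. w I) / 2 - N\<bar> = \<bar>(\<Sum>I\<in>S. w I) / 2 / N - 1\<bar> * N"
        using Npos by (simp add: abs_mult_pos' field_simps) 
      also have "\<dots> \<le> (\<epsilon> / 2) * N" using mN \<delta> Npos by (intro mult_right_mono) auto
      finally show ?thesis .
    qed
    have WN: "(\<Sum>I\<in>S. w I) / N \<le> 3"
    proof -
      have "(\<Sum>I\<in>S. w I) / 2 / N \<le> 3/2" using mN \<delta> by linarith
      then show ?thesis by simp
    qed
    define t where "t = \<epsilon> * N / 2"
    have tpos: "0 < t" unfolding t_def using \<epsilon> Npos by simp
    have rs: "rand_space n r = PiM S (\<lambda>_. U)" unfolding rand_space_def S_def U_def ..
    have be: "betti_entry n r X p q = (\<Sum>I\<in>S. X I * w I)" for X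
      unfolding betti_entry_def S_def w_def ..
    have "measure (rand_space n r)
             {X \<in> space (rand_space n r).
                \<bar>betti_entry n r X p q / (real ((r - n) choose p) * mu n q r p) - 1\<bar> > \<epsilon>}
          \<le> (\<Sum>I\<in>S. (w I)^2) / (4 * t^2)"
      unfolding rs
    proof (rule tail_bound2[OF finS tpos])
      fix X assume "X \<in> {X \<in> space (PiM S (\<lambda>_. U)).
                \<bar>betti_entry n r X p q / (real ((r - n) choose p) * mu n q r p) - 1\<bar> > \<epsilon>}"
      then have X: "X \<in> space (PiM S (\<lambda>_. U))" "\<epsilon> < \<bar>(\<Sum>I\<in>S. X I * w I) / N - 1\<bar>"
        unfolding be N_def by auto
      have "\<bar>(\<Sum>I\<in>S. X I * w I) / N - 1\<bar> = \<bar>(\<Sum>I\<in>S. X I * w I) - N\<bar> / N"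
        using Npos by (simp add: field_simps)
      then have "\<epsilon> * N < \<bar>(\<Sum>I\<in>S. X I * w I) - N\<bar>" using X(2) Npos by (simp add: pos_less_divide_eq)
      then have "t \<le> \<bar>(\<Sum>I\<in>S. X I * w I) - (\<Sum>I\<in>S. w I) / 2\<bar>"
        using mN2 unfolding t_def by linarith
      then show "X \<in> space (PiM S (\<lambda>_. U)) \<and> t \<le> \<bar>(\<Sum>I\<in>S. X I * w I) - (\<Sum>I\<in>S. w I) / 2\<bar>"
        using X(1) by simp
    qed
    also have "\<dots> \<le> K * R1 * (\<Sum>I\<in>S. w I) / (4 * t^2)"
      using sq tpos unfolding R1_def by (intro divide_right_mono) auto
    also have "\<dots> = (K * R1 / N) * ((\<Sum>I\<in>S. w I) / N) / \<epsilon>^2"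
      unfolding t_def using Npos \<epsilon> by (simp add: field_simps power2_eq_square)
    also have "\<dots> \<le> (C0 / real r) * 3 / \<epsilon>^2"
    proof -
      have "0 \<le> K * R1 / N" using Kpos Npos r0 unfolding R1_def by simp
      moreover have "0 \<le> (\<Sum>I\<in>S. w I) / N" using w_nn Npos by (simp add: sum_nonneg)
      ultimately have "(K * R1 / N) * ((\<Sum>I\<in>S. w I) / N) \<le> (C0 / real r) * 3"
        using Qb WN by (intro mult_mono) auto
      then show ?thesis using \<epsilon> by (intro divide_right_mono) auto
    qed
    also have "\<dots> < \<eta>"
    proof -
      have "2 * (real A1 + real A2 + real n + 1) / c > 0" using c0' by simp
      then have "4 * C0 / (\<epsilon>^2 * \<eta>) < real r" using rge by linarith
      then have "4 * C0 < real r * (\<epsilon>^2 * \<eta>)" using \<epsilon> \<eta> by (simp add: pos_divide_less_eq)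
      then have "3 * C0 < \<eta> * (real r * \<epsilon>^2)" using C0pos by (simp add: algebra_simps)
      then show ?thesis using r0 \<epsilon> by (simp add: pos_divide_less_eq)
    qed
    finally show "measure (rand_space n r)
             {X \<in> space (rand_space n r).
                \<bar>betti_entry n r X p q / (real ((r - n) choose p) * mu n q r p) - 1\<bar> > \<epsilon>} < \<eta>" .
  qed
qed

end
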